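(* Let $\mathcal{F}=\langle\mathbb{A},(\mu_i)_{i\in\mathsf{Ag}}\rangle$ be an APE-structure and $\mathbb{E}=(E,(\sim_i),(P_i),\Phi,\mathsf{pre})$ a probabilistic event structure over $\mathbb{A}$. Then the maps $(\mu^{\mathbb{E}}_i)_{i\in\mathsf{Ag}}$ of the updated structure $\mathcal{F}^{\mathbb{E}}=(\mathbb{A}^{\mathbb{E}},(\mu^{\mathbb{E}}_i)_{i\in\mathsf{Ag}})$ are well-defined.
   Context: Fix a set $\mathsf{Ag}$ of agents. A monadic Heyting algebra is a Heyting algebra $\mathbb{L}$ with, for each $i\in\mathsf{Ag}$, monotone unary operations $\lozenge_i,\Box_i$ such that for all $a,b$: $a\leq\lozenge_i a$; $\Box_i a\leq a$; $\lozenge_i(a\vee b)\leq\lozenge_i a\vee\lozenge_i b$; $\Box_i(a\to b)\leq\Box_i a\to\Box_i b$; $\lozenge_i a\leq\Box_i\lozenge_i a$; $\lozenge_i\Box_i a\leq\Box_i a$; $\Box_i(a\to b)\leq\lozenge_i a\to\lozenge_i b$; $\lozenge_i\bot\leq\bot$; $\top\leq\Box_i\top$. An epistemic Heyting algebra is a finite monadic Heyting algebra with $\lozenge_i a\vee\neg\lozenge_i a=\top$ for all $i,a$. An element $c$ is $i$-minimal if $c\neq\bot$, $\lozenge_i c=c$, and whenever $d<c$ and $\lozenge_i d=d$ then $d=\bot$; $\mathsf{Min}_i(\cdot)$ is the set of $i$-minimal elements. A partial map $\mu:\mathbb{A}\to\mathbb{R}^+$ is an $i$-premeasure if: $\mathsf{dom}(\mu)=\mathsf{Min}_i(\mathbb{A}){\downarrow}$;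 $\mu$ is order-preserving; for $a\in\mathsf{Min}_i(\mathbb{A})$ and $b,c\leq a$, $\mu(b\vee c)=\mu(b)+\mu(c)-\mu(b\wedge c)$; $\mu(\bot)=0$ if $\mathsf{dom}(\mu)\neq\varnothing$. It is an $i$-measure if also: for $a\in\mathsf{Min}_i(\mathbb{A})$ and $b<c\leq a$, $\mu(b)<\mu(c)$; and $\mu(a)=1$ for $a\in\mathsf{Min}_i(\mathbb{A})$. An APE-structure is $\langle\mathbb{A},(\mu_i)\rangle$ with $\mathbb{A}$ an epistemic Heyting algebra and each $\mu_i$ an $i$-measure. A pre-ordered multiset on $X$ is a multiset in which the copies $x_1,\dots,x_n$ of an element carry the linear order $x_1\prec\cdots\prec x_n$. A probabilistic event structure over $\mathbb{A}$ is $(E,(\sim_i),(P_i),\Phi,\mathsf{pre})$: $E$ non-empty finite; $\sim_i$ equivalence relations on $E$; $P_i:E\to\,]0,1]$ with $\sum\{P_i(e')\mid e'\sim_i e\}=1$; $\Phi$ a finite pre-ordered multiset on $\mathbb{A}$ such that any $a,b\in\Phi$ arising from distinct elements satisfy $a\wedge b=\bot$ or $a<b$ or $b<a$; $\mathsf{pre}(\bullet\mid a)$ a probability distribution on $E$ for each $a\in\Phi$; and if $\mathsf{pre}(e\mid a)=0$ then $\mathsf{pre}(e\mid b)=0$ for $b\in\Phi$ with $a<b$ (distinct elements) or $a\prec b$ (copies). For $a\in\Phi$: $\mathrm{mb}(a)$ is the set of maximal elements of $\Phi\cap({\downarrow}a\setminus\{a\})$, and $\mu^a_i(x):=\mu_i(x\wedge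 a)-\sum_{b\in\mathrm{mb}(a)}\mu_i(x\wedge b)$ for $x\in\mathsf{Min}_i(\mathbb{A}){\downarrow}$. Intermediate algebra $\mathbb{A}'=\prod_{\mathbb{E}}\mathbb{A}$: all maps $f:E\to\mathbb{A}$ with pointwise Heyting operations, $(\lozenge'_i f)(e)=\bigvee\{\lozenge_i f(e')\mid e'\sim_i e\}$, $(\Box'_i f)(e)=\bigwedge\{\Box_i f(e')\mid e'\sim_i e\}$; and $\mu'_i:\mathsf{Min}_i(\mathbb{A}'){\downarrow}\to\mathbb{R}^+$, $\mu'_i(f)=\sum_{e\in E}\sum_{a\in\Phi}P_i(e)\mu^a_i(f(e))\mathsf{pre}(e\mid a)$. Define $\overline{\mathsf{pre}}\in\mathbb{A}'$ by $\overline{\mathsf{pre}}(e)=\bigvee\{a\in\Phi\mid\mathsf{pre}(e\mid a)\neq0\}$. For an epistemic Heyting algebra $\mathbb{B}$ and $c\in\mathbb{B}$, the pseudo-quotient $\mathbb{B}^c$ has carrier the quotient Heyting algebra by $x\cong_c y\iff x\wedge c=y\wedge c$ (classes $[x]$), with $\lozenge^c_i[x]=[\lozenge_i(x\wedge c)]$, $\Box^c_i[x]=[\Box_i(c\to x)]$. Set $\mathbb{A}^{\mathbb{E}}:=(\mathbb{A}')^{\overline{\mathsf{pre}}}$. The updated structure is $\mathcal{F}^{\mathbb{E}}=(\mathbb{A}^{\mathbb{E}},(\mu^{\mathbb{E}}_i))$ where $\mu^{\mathbb{E}}_i:\mathsf{Min}_i(\mathbb{A}^{\mathbb{E}}){\downarrow}\to[0,1]$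 is given by $\mu^{\mathbb{E}}_i([g])=0$ if $[g]=\bot$ and otherwise $\mu^{\mathbb{E}}_i([g])=\mu'_i(g)/\mu'_i(f)$, where $[f]$ is the only element of $\mathsf{Min}_i(\mathbb{A}^{\mathbb{E}})$ with $[g]\leq[f]$. Well-definedness means: this $[f]$ is unique, the denominator is nonzero, and the value does not depend on the chosen representatives. *)

theory Defs
  imports Complex_Main "HOL-Library.Multiset"
begin

text \<open>The algebra A is the whole (finite) type 'a; its lattice structure is
the type-class lattice; its Heyting implication is a parameter imp
characterised by the Heyting adjunction.\<close>

definition heyting_imp :: "('a::complete_lattice \<Rightarrow> 'a \<Rightarrow> 'a) \<Rightarrow> bool" where
  "heyting_imp imp \<longleftrightarrow> (\<forall>x a b. x \<le> imp a b \<longleftrightarrow> inf x a \<le> b)"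

definition monadic_heyting ::
  "'i set \<Rightarrow> ('a::complete_lattice \<Rightarrow> 'a \<Rightarrow> 'a) \<Rightarrow> ('i \<Rightarrow> 'a \<Rightarrow> 'a) \<Rightarrow> ('i \<Rightarrow> 'a \<Rightarrow> 'a) \<Rightarrow> bool" where
  "monadic_heyting Ag imp dia box \<longleftrightarrow> heyting_imp imp \<and>
     (\<forall>i\<in>Ag. mono (dia i) \<and> mono (box i) \<and>
        (\<forall>a b. a \<le> dia i a \<and> box i a \<le> a \<and>
               dia i (sup a b) \<le> sup (dia i a) (dia i b) \<and>
               box i (imp a b) \<le> imp (box i a) (box i b) \<and>
               dia i a \<le> box i (dia i a) \<and>
               dia i (box i a) \<le> box i a \<and>
               box i (imp a b) \<le> imp (dia i a) (dia i b)) \<and>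
        dia i bot \<le> bot \<and> top \<le> box i top)"

definition epistemic_heyting ::
  "'i set \<Rightarrow> ('a::{finite,complete_lattice} \<Rightarrow> 'a \<Rightarrow> 'a) \<Rightarrow> ('i \<Rightarrow> 'a \<Rightarrow> 'a) \<Rightarrow> ('i \<Rightarrow> 'a \<Rightarrow> 'a) \<Rightarrow> bool" where
  "epistemic_heyting Ag imp dia box \<longleftrightarrow> monadic_heyting Ag imp dia box \<and>
     (\<forall>i\<in>Ag. \<forall>a. sup (dia i a) (imp (dia i a) bot) = top)"

definition minimal_elts :: "'b set \<Rightarrow> ('b \<Rightarrow> 'b \<Rightarrow> bool) \<Rightarrow> 'b \<Rightarrow> ('b \<Rightarrow> 'b) \<Rightarrow> 'b set" where
  "minimal_elts S le bt D =
     {c \<in> S. c \<noteq> bt \<and> D c = c \<and> (\<forall>d\<in>S. le d c \<and> d \<noteq> c \<and> D d = d \<longrightarrow> d = bt)}"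

definition MinA :: "('a::complete_lattice \<Rightarrow> 'a) \<Rightarrow> 'a set" where
  "MinA D = minimal_elts UNIV (\<le>) bot D"

definition MinA_down :: "('a::complete_lattice \<Rightarrow> 'a) \<Rightarrow> 'a set" where
  "MinA_down D = {x. \<exists>c\<in>MinA D. x \<le> c}"

text \<open>A partial map with domain MinA_down D is represented by a total map m
whose values outside the domain are irrelevant.\<close>
definition i_premeasure :: "('a::complete_lattice \<Rightarrow> 'a) \<Rightarrow> ('a \<Rightarrow> real) \<Rightarrow> bool" where
  "i_premeasure D m \<longleftrightarrow>
     (\<forall>x\<in>MinA_down D. 0 \<le> m x) \<and>
     (\<forall>x\<in>MinA_down D. \<forall>y\<in>MinA_down D. x \<le> y \<longrightarrow> m x \<le> m y) \<and>
     (\<forall>a\<in>MinA D. \<forall>b c. b \<le> a \<and> c \<le> a \<longrightarrow> m (sup b c) = m b + m c - m (inf b c)) \<and>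
     (MinA_down D \<noteq> {} \<longrightarrow> m bot = 0)"

definition i_measure :: "('a::complete_lattice \<Rightarrow> 'a) \<Rightarrow> ('a \<Rightarrow> real) \<Rightarrow> bool" where
  "i_measure D m \<longleftrightarrow> i_premeasure D m \<and>
     (\<forall>a\<in>MinA D. \<forall>b c. b < c \<and> c \<le> a \<longrightarrow> m b < m c) \<and>
     (\<forall>a\<in>MinA D. m a = 1)"

definition APE_structure ::
  "'i set \<Rightarrow> ('a::{finite,complete_lattice} \<Rightarrow> 'a \<Rightarrow> 'a) \<Rightarrow> ('i \<Rightarrow> 'a \<Rightarrow> 'a) \<Rightarrow> ('i \<Rightarrow> 'a \<Rightarrow> 'a)
     \<Rightarrow> ('i \<Rightarrow> 'a \<Rightarrow> real) \<Rightarrow> bool" where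
  "APE_structure Ag imp dia box mu \<longleftrightarrow> epistemic_heyting Ag imp dia box \<and>
     (\<forall>i\<in>Ag. i_measure (dia i) (mu i))"

text \<open>The copies x_1,...,x_n of an element x of the multiset Phi are the pairs (x,k), 1 \<le> k \<le> n.\<close>
definition copies :: "'a multiset \<Rightarrow> ('a \<times> nat) set" where
  "copies Phi = {(x, k). 1 \<le> k \<and> k \<le> count Phi x}"

definition copy_less :: "('a::order \<times> nat) \<Rightarrow> ('a \<times> nat) \<Rightarrow> bool" where
  "copy_less p q \<longleftrightarrow> fst p < fst q \<or> (fst p = fst q \<and> snd p < snd q)"

definition prob_event_structure ::
  "'i set \<Rightarrow> 'e set \<Rightarrow> ('i \<Rightarrow> ('e \<times> 'e) set) \<Rightarrow> ('i \<Rightarrow> 'e \<Rightarrow> real) \<Rightarrow> 'a::complete_lattice multiset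
     \<Rightarrow> ('e \<Rightarrow> 'a \<times> nat \<Rightarrow> real) \<Rightarrow> bool" where
  "prob_event_structure Ag E sim P Phi pre \<longleftrightarrow>
     finite E \<and> E \<noteq> {} \<and>
     (\<forall>i\<in>Ag. equiv E (sim i)) \<and>
     (\<forall>i\<in>Ag. \<forall>e\<in>E. 0 < P i e \<and> P i e \<le> 1 \<and> (\<Sum>e'\<in>{e'\<in>E. (e', e) \<in> sim i}. P i e') = 1) \<and>
     (\<forall>a\<in>#Phi. \<forall>b\<in>#Phi. a \<noteq> b \<longrightarrow> inf a b = bot \<or> a < b \<or> b < a) \<and>
     (\<forall>p\<in>copies Phi. (\<forall>e\<in>E. 0 \<le> pre e p) \<and> (\<Sum>e\<in>E. pre e p) = 1) \<and>
     (\<forall>p\<in>copies Phi. \<forall>q\<in>copies Phi. \<forall>e\<in>E. copy_less p q \<and> pre e p = 0 \<longrightarrow> pre e q = 0)"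

definition mb :: "'a::order multiset \<Rightarrow> 'a \<times> nat \<Rightarrow> ('a \<times> nat) set" where
  "mb Phi p = {q \<in> copies Phi. copy_less q p \<and> \<not> (\<exists>r\<in>copies Phi. copy_less r p \<and> copy_less q r)}"

definition mu_a :: "('a::complete_lattice \<Rightarrow> real) \<Rightarrow> 'a multiset \<Rightarrow> 'a \<times> nat \<Rightarrow> 'a \<Rightarrow> real" where
  "mu_a m Phi p x = m (inf x (fst p)) - (\<Sum>q\<in>mb Phi p. m (inf x (fst q)))"

text \<open>Maps E \<rightarrow> A, represented as functions that are bot outside E; order and
lattice operations are pointwise (HOL's function lattice).\<close>
definition AE :: "'e set \<Rightarrow> ('e \<Rightarrow> 'a::complete_lattice) set" where
  "AE E = {f. \<forall>e. e \<notin> E \<longrightarrow> f e = bot}"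

definition diaP :: "'e set \<Rightarrow> ('e \<times> 'e) set \<Rightarrow> ('a::complete_lattice \<Rightarrow> 'a) \<Rightarrow> ('e \<Rightarrow> 'a) \<Rightarrow> ('e \<Rightarrow> 'a)" where
  "diaP E s D f = (\<lambda>e. if e \<in> E then Sup {D (f e') | e'. e' \<in> E \<and> (e', e) \<in> s} else bot)"

definition MinP :: "'e set \<Rightarrow> ('e \<times> 'e) set \<Rightarrow> ('a::complete_lattice \<Rightarrow> 'a) \<Rightarrow> ('e \<Rightarrow> 'a) set" where
  "MinP E s D = minimal_elts (AE E) (\<le>) bot (diaP E s D)"

definition MinP_down :: "'e set \<Rightarrow> ('e \<times> 'e) set \<Rightarrow> ('a::complete_lattice \<Rightarrow> 'a) \<Rightarrow> ('e \<Rightarrow> 'a) set" where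
  "MinP_down E s D = {g \<in> AE E. \<exists>f\<in>MinP E s D. g \<le> f}"

text \<open>mu'_i (formula; its domain is MinP_down).\<close>
definition muP :: "'e set \<Rightarrow> ('e \<Rightarrow> real) \<Rightarrow> 'a::complete_lattice multiset \<Rightarrow> ('e \<Rightarrow> 'a \<times> nat \<Rightarrow> real)
     \<Rightarrow> ('a \<Rightarrow> real) \<Rightarrow> ('e \<Rightarrow> 'a) \<Rightarrow> real" where
  "muP E Pi Phi pre m f = (\<Sum>e\<in>E. \<Sum>p\<in>copies Phi. Pi e * mu_a m Phi p (f e) * pre e p)"

definition prebar :: "'e set \<Rightarrow> 'a::complete_lattice multiset \<Rightarrow> ('e \<Rightarrow> 'a \<times> nat \<Rightarrow> real) \<Rightarrow> ('e \<Rightarrow> 'a)" where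
  "prebar E Phi pre = (\<lambda>e. if e \<in> E then Sup {fst p | p. p \<in> copies Phi \<and> pre e p \<noteq> 0} else bot)"

definition qclass :: "'e set \<Rightarrow> ('e \<Rightarrow> 'a::complete_lattice) \<Rightarrow> ('e \<Rightarrow> 'a) \<Rightarrow> ('e \<Rightarrow> 'a) set" where
  "qclass E c g = {h \<in> AE E. inf h c = inf g c}"

definition Qcarrier :: "'e set \<Rightarrow> ('e \<Rightarrow> 'a::complete_lattice) \<Rightarrow> ('e \<Rightarrow> 'a) set set" where
  "Qcarrier E c = qclass E c ` AE E"

definition qle :: "('e \<Rightarrow> 'a::complete_lattice) \<Rightarrow> ('e \<Rightarrow> 'a) set \<Rightarrow> ('e \<Rightarrow> 'a) set \<Rightarrow> bool" where
  "qle c X Y \<longleftrightarrow> (\<exists>x\<in>X. \<exists>y\<in>Y. inf x c \<le> inf y c)"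

definition qdia :: "'e set \<Rightarrow> ('e \<times> 'e) set \<Rightarrow> ('a::complete_lattice \<Rightarrow> 'a) \<Rightarrow> ('e \<Rightarrow> 'a)
     \<Rightarrow> ('e \<Rightarrow> 'a) set \<Rightarrow> ('e \<Rightarrow> 'a) set" where
  "qdia E s D c X = qclass E c (diaP E s D (inf (SOME x. x \<in> X) c))"

definition MinQ :: "'e set \<Rightarrow> ('e \<times> 'e) set \<Rightarrow> ('a::complete_lattice \<Rightarrow> 'a) \<Rightarrow> ('e \<Rightarrow> 'a)
     \<Rightarrow> ('e \<Rightarrow> 'a) set set" where
  "MinQ E s D c = minimal_elts (Qcarrier E c) (qle c) (qclass E c bot) (qdia E s D c)"

definition MinQ_down :: "'e set \<Rightarrow> ('e \<times> 'e) set \<Rightarrow> ('a::complete_lattice \<Rightarrow> 'a) \<Rightarrow> ('e \<Rightarrow> 'a)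
     \<Rightarrow> ('e \<Rightarrow> 'a) set set" where
  "MinQ_down E s D c = {X \<in> Qcarrier E c. \<exists>F\<in>MinQ E s D c. qle c X F}"

end

theory Submission imports Defs begin

lemma hey_adj: "heyting_imp imp \<Longrightarrow> (x \<le> imp a b) = (inf x a \<le> b)"
  by (simp add: heyting_imp_def)

lemma hey_distrib:
  fixes imp :: "'a::complete_lattice \<Rightarrow> 'a \<Rightarrow> 'a"
  assumes "heyting_imp imp"
  shows "inf (x::'a::complete_lattice) (sup a b) = sup (inf x a) (inf x b)"
proof (rule antisym)
  have "a \<le> imp x (sup (inf x a) (inf x b))"
    using hey_adj[OF assms] by (simp add: inf_commute le_supI1)
  moreover have "b \<le> imp x (sup (inf x a) (inf x b))"
    using hey_adj[OF assms] by (simp add: inf_commute le_supI2)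
  ultimately have "sup a b \<le> imp x (sup (inf x a) (inf x b))" by simp
  then show "inf x (sup a b) \<le> sup (inf x a) (inf x b)"
    using hey_adj[OF assms] by (simp add: inf_commute)
next
  show "sup (inf x a) (inf x b) \<le> inf x (sup a b)"
    by (simp add: le_infI2)
qed

lemma hey_Sup_bot:
  fixes imp :: "'a::complete_lattice \<Rightarrow> 'a \<Rightarrow> 'a"
  assumes "heyting_imp imp" "\<forall>s\<in>S. inf (x::'a::complete_lattice) s = bot"
  shows "inf x (Sup S) = bot"
proof -
  have "\<forall>s\<in>S. s \<le> imp x bot" using assms hey_adj[OF assms(1)] by (simp add: inf_commute)
  then have "Sup S \<le> imp x bot" by (simp add: Sup_least)
  then have "inf (Sup S) x \<le> bot" using hey_adj[OF assms(1)] by blast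
  then show ?thesis by (simp add: inf_commute bot_unique)
qed

locale dax =
  fixes imp :: "'a::{finite,complete_lattice} \<Rightarrow> 'a \<Rightarrow> 'a" and D B :: "'a \<Rightarrow> 'a"
  assumes hi: "heyting_imp imp"
    and monoDia: "mono D" and monoBox: "mono B"
    and extD: "\<And>a. a \<le> D a" and Bdefl: "\<And>a. B a \<le> a"
    and DBD: "\<And>a. D a \<le> B (D a)" and DB: "\<And>a. D (B a) \<le> B a"
    and Bimp: "\<And>a b. B (imp a b) \<le> imp (D a) (D b)"
    and Dbot: "D bot \<le> bot"
begin

lemma Dbot_eq: "D bot = bot" using Dbot bot_unique by blast

lemma idem: "D (D a) = D a"
proof (rule antisym)
  have "D (D a) \<le> D (B (D a))" using monoDia DBD by (simp add: monoD)
  also have "\<dots> \<le> B (D a)" by (rule DB)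
  also have "\<dots> \<le> D a" by (rule Bdefl)
  finally show "D (D a) \<le> D a" .
qed (rule extD)

lemma L: "inf (D x) (D b) \<le> D (inf x (D b))"
proof -
  have "D b \<le> imp x (inf x (D b))" using hey_adj[OF hi] by (simp add: inf_commute)
  then have "B (D b) \<le> B (imp x (inf x (D b)))" using monoBox by (simp add: monoD)
  then have "D b \<le> imp (D x) (D (inf x (D b)))" using DBD Bimp order_trans by metis
  then show ?thesis using hey_adj[OF hi] by (simp add: inf_commute)
qed

lemma atom_meets:
  assumes c0: "c0 \<in> MinA D" and le: "c0 \<le> D a"
  shows "inf c0 a \<noteq> bot"
proof
  assume h: "inf c0 a = bot"
  have fix0: "D c0 = c0" and nb: "c0 \<noteq> bot" using c0 by (auto simp: MinA_def minimal_elts_def)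
  have "a \<le> imp c0 bot" using h hey_adj[OF hi] by (simp add: inf_commute)
  then have "D a \<le> D (imp c0 bot)" using monoDia by (simp add: monoD)
  then have 1: "c0 \<le> D (imp c0 bot)" using le by simp
  have "inf (imp c0 bot) c0 \<le> bot" using hey_adj[OF hi] by blast
  then have z: "inf (imp c0 bot) c0 = bot" using bot_unique by blast
  have "inf (D (imp c0 bot)) (D c0) \<le> D (inf (imp c0 bot) (D c0))" by (rule L)
  then have "inf (D (imp c0 bot)) c0 \<le> bot" using fix0 z Dbot_eq by simp
  with 1 have "c0 \<le> bot" by (metis inf.absorb2 inf_commute)
  with nb show False using bot_unique by blast
qed

lemma exists_atom:
  assumes "z \<noteq> bot" "D z = z"
  shows "\<exists>c0\<in>MinA D. c0 \<le> z"
proof -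
  let ?S = "{w. w \<noteq> bot \<and> D w = w \<and> w \<le> z}"
  have "z \<in> ?S" using assms by simp
  then obtain m where m: "m \<in> ?S" "m \<le> z" "\<forall>b\<in>?S. b \<le> m \<longrightarrow> m = b"
    using finite_has_minimal2[of ?S z] by auto
  have "m \<in> MinA D"
    unfolding MinA_def minimal_elts_def using m by auto
  then show ?thesis using m by blast
qed

end


locale pax = dax imp D B for imp :: "'a::{finite,complete_lattice} \<Rightarrow> 'a \<Rightarrow> 'a" and D B +
  fixes E :: "'e set" and s :: "('e \<times> 'e) set"
  assumes eqv: "equiv E s"
begin

lemma s_sub: "(x, y) \<in> s \<Longrightarrow> x \<in> E \<and> y \<in> E"
  using eqv by (auto simp: equiv_def refl_on_def)
lemma s_refl: "x \<in> E \<Longrightarrow> (x, x) \<in> s"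
  using eqv by (auto simp: equiv_def refl_on_def)
lemma s_sym: "(x, y) \<in> s \<Longrightarrow> (y, x) \<in> s"
  using eqv by (auto simp: equiv_def dest: symD)
lemma s_trans: "(x, y) \<in> s \<Longrightarrow> (y, z) \<in> s \<Longrightarrow> (x, z) \<in> s"
  using eqv by (auto simp: equiv_def dest: transD)

lemma diaP_AE: "diaP E s D f \<in> AE E"
  by (simp add: diaP_def AE_def)

lemma diaP_ge: "e \<in> E \<Longrightarrow> e' \<in> E \<Longrightarrow> (e', e) \<in> s \<Longrightarrow> D (f e') \<le> diaP E s D f e"
  unfolding diaP_def by (auto intro!: Sup_upper)

lemma diaP_le: "e \<in> E \<Longrightarrow> (\<And>e'. e' \<in> E \<Longrightarrow> (e', e) \<in> s \<Longrightarrow> D (f e') \<le> z) \<Longrightarrow> diaP E s D f e \<le> z"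
  unfolding diaP_def by (auto intro!: Sup_least)

lemma diaP_out: "e \<notin> E \<Longrightarrow> diaP E s D f e = bot"
  unfolding diaP_def by simp

lemma diaP_ext: assumes "f \<in> AE E" shows "f \<le> diaP E s D f"
proof (rule le_funI)
  fix e show "f e \<le> diaP E s D f e"
  proof (cases "e \<in> E")
    case True
    then show ?thesis using diaP_ge[OF True True s_refl[OF True], of f] extD order_trans by blast
  next
    case False then show ?thesis using assms by (simp add: AE_def)
  qed
qed

lemma diaP_mono: assumes "f \<le> g" shows "diaP E s D f \<le> diaP E s D g"
proof (rule le_funI)
  fix e show "diaP E s D f e \<le> diaP E s D g e"
  proof (cases "e \<in> E")
    case True
    show ?thesis
    proof (rule diaP_le[OF True])
      fix e' assume "e' \<in> E" "(e', e) \<in> s"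
      have "D (f e') \<le> D (g e')" using assms monoDia by (simp add: le_funD monoD)
      then show "D (f e') \<le> diaP E s D g e" using diaP_ge[OF True \<open>e' \<in> E\<close> \<open>(e', e) \<in> s\<close>, of g] by simp
    qed
  next
    case False then show ?thesis by (simp add: diaP_out)
  qed
qed

definition ind :: "'a \<Rightarrow> 'e \<Rightarrow> 'e \<Rightarrow> 'a" where
  "ind c0 e0 = (\<lambda>e. if e \<in> E \<and> (e, e0) \<in> s then c0 else bot)"

lemma ind_AE: "ind c0 e0 \<in> AE E" by (simp add: ind_def AE_def)

lemma ind_fix: assumes "D c0 = c0" shows "diaP E s D (ind c0 e0) = ind c0 e0"
proof (rule HOL.ext)
  fix e
  show "diaP E s D (ind c0 e0) e = ind c0 e0 e"
  proof (cases "e \<in> E")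
    case False then show ?thesis by (simp add: diaP_out ind_def)
  next
    case True
    show ?thesis
    proof (rule antisym)
      show "diaP E s D (ind c0 e0) e \<le> ind c0 e0 e"
      proof (rule diaP_le[OF True])
        fix e' assume "e' \<in> E" "(e', e) \<in> s"
        show "D (ind c0 e0 e') \<le> ind c0 e0 e"
        proof (cases "(e', e0) \<in> s")
          case True
          have "(e, e0) \<in> s" by (rule s_trans[OF s_sym[OF \<open>(e', e) \<in> s\<close>] True])
          then show ?thesis using True assms \<open>e' \<in> E\<close> \<open>e \<in> E\<close> by (simp add: ind_def)
        next
          case False
          then have "ind c0 e0 e' = bot" by (simp add: ind_def)
          then show ?thesis using Dbot_eq by simp
        qed
      qed
    next
      show "ind c0 e0 e \<le> diaP E s D (ind c0 e0) e"
        using diaP_ext[OF ind_AE] by (simp add: le_funD)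
    qed
  qed
qed

lemma fixed_pt:
  assumes "diaP E s D f = f" "e \<in> E" shows "D (f e) = f e"
proof (rule antisym)
  show "D (f e) \<le> f e" using diaP_ge[OF assms(2) assms(2) s_refl[OF assms(2)], of f] assms(1) by simp
qed (rule extD)

lemma MinP_below_atom:
  assumes f0: "f0 \<in> MinP E s D"
  shows "\<exists>c0\<in>MinA D. \<forall>e. f0 e \<le> c0"
proof -
  have AE: "f0 \<in> AE E" and nb: "f0 \<noteq> bot" and fx: "diaP E s D f0 = f0"
    and mn: "\<forall>d\<in>AE E. d \<le> f0 \<and> d \<noteq> f0 \<and> diaP E s D d = d \<longrightarrow> d = bot"
    using f0 by (auto simp: MinP_def minimal_elts_def)
  obtain e0 where e0: "f0 e0 \<noteq> bot" using nb by (metis bot_fun_def HOL.ext)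
  then have e0E: "e0 \<in> E" using AE by (auto simp: AE_def)
  have "D (f0 e0) = f0 e0" using fixed_pt[OF fx e0E] .
  then obtain c0 where c0: "c0 \<in> MinA D" "c0 \<le> f0 e0" using exists_atom e0 by blast
  have Dc0: "D c0 = c0" and c0nb: "c0 \<noteq> bot" using c0 by (auto simp: MinA_def minimal_elts_def)
  have le: "ind c0 e0 \<le> f0"
  proof (rule le_funI)
    fix e show "ind c0 e0 e \<le> f0 e"
    proof (cases "e \<in> E \<and> (e, e0) \<in> s")
      case True
      then have "D (f0 e0) \<le> diaP E s D f0 e" using diaP_ge[OF _ e0E s_sym] by blast
      then have "f0 e0 \<le> f0 e" using fx extD order_trans by metis
      then have "c0 \<le> f0 e" using c0(2) order_trans by blast
      then show ?thesis using True by (simp add: ind_def)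
    next
      case False then show ?thesis unfolding ind_def by auto
    qed
  qed
  have "ind c0 e0 \<noteq> bot"
  proof
    assume "ind c0 e0 = bot"
    then have "ind c0 e0 e0 = bot" by simp
    then show False using e0E s_refl c0nb by (simp add: ind_def)
  qed
  then have eq: "f0 = ind c0 e0" using mn ind_AE le ind_fix[OF Dc0] by blast
  have "\<forall>e. f0 e \<le> c0"
  proof
    fix e show "f0 e \<le> c0" unfolding eq ind_def by simp
  qed
  then show ?thesis using c0 by blast
qed

lemma MinP_of_atom:
  assumes c0: "c0 \<in> MinA D" and e0E: "e0 \<in> E"
  shows "ind c0 e0 \<in> MinP E s D"
proof -
  have Dc0: "D c0 = c0" and c0nb: "c0 \<noteq> bot"
    and mn: "\<forall>d. d \<le> c0 \<and> d \<noteq> c0 \<and> D d = d \<longrightarrow> d = bot"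
    using c0 by (auto simp: MinA_def minimal_elts_def)
  have nb: "ind c0 e0 \<noteq> bot"
  proof
    assume "ind c0 e0 = bot"
    then have "ind c0 e0 e0 = bot" by simp
    then show False using e0E s_refl c0nb by (simp add: ind_def)
  qed
  have "d = bot" if d: "d \<in> AE E" "d \<le> ind c0 e0" "d \<noteq> ind c0 e0" "diaP E s D d = d" for d
  proof (rule ccontr)
    assume "d \<noteq> bot"
    then obtain e1 where e1: "d e1 \<noteq> bot" by (metis bot_fun_def HOL.ext)
    have "d e1 \<le> ind c0 e0 e1" using d(2) by (simp add: le_funD)
    then have e1s: "e1 \<in> E" "(e1, e0) \<in> s" and le1: "d e1 \<le> c0"
      using e1 by (auto simp: ind_def bot_unique split: if_splits)
    have "D (d e1) = d e1" using fixed_pt[OF d(4) e1s(1)] .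
    then have de1: "d e1 = c0" using mn le1 e1 by blast
    have "d = ind c0 e0"
    proof (rule HOL.ext)
      fix e show "d e = ind c0 e0 e"
      proof (cases "e \<in> E \<and> (e, e0) \<in> s")
        case True
        then have "(e1, e) \<in> s" using s_trans[OF e1s(2) s_sym] by blast
        then have "D (d e1) \<le> diaP E s D d e" using diaP_ge True e1s by blast
        then have "c0 \<le> d e" using d(4) de1 extD order_trans by metis
        moreover have "d e \<le> c0" using le_funD[OF d(2), of e] True by (simp add: ind_def)
        ultimately show ?thesis using True by (simp add: ind_def)
      next
        case False
        have "d e \<le> ind c0 e0 e" using d(2) by (simp add: le_funD)
        then show ?thesis using False unfolding ind_def by (auto simp: bot_unique)
      qed
    qed
    then show False using d(3) by simp
  qed
  then show ?thesis using nb ind_AE ind_fix[OF Dc0]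
    unfolding MinP_def minimal_elts_def by blast
qed

end


lemma finite_copies: "finite (copies Phi)"
proof -
  have "copies Phi \<subseteq> (SIGMA x:set_mset Phi. {1..count Phi x})"
    by (auto simp: copies_def simp flip: count_greater_zero_iff)
  then show ?thesis by (rule finite_subset) auto
qed

lemma copies_in: "p \<in> copies Phi \<Longrightarrow> fst p \<in># Phi"
  by (auto simp: copies_def simp flip: count_greater_zero_iff)

lemma mb_sub: "mb Phi p \<subseteq> copies Phi" by (auto simp: mb_def)
lemma mb_less: "q \<in> mb Phi p \<Longrightarrow> copy_less q p" by (auto simp: mb_def)
lemma copy_less_le: "copy_less q p \<Longrightarrow> fst q \<le> fst p"
  by (auto simp: copy_less_def)
lemma copy_less_trans: "copy_less p q \<Longrightarrow> copy_less q r \<Longrightarrow> copy_less p r"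
  by (auto simp: copy_less_def)
lemma copy_less_irrefl: "\<not> copy_less p p"
  by (auto simp: copy_less_def)
lemma finite_mb: "finite (mb Phi p)"
  using finite_subset[OF mb_sub finite_copies] .

lemma mb_disj:
  assumes ph: "\<forall>a\<in>#Phi. \<forall>b\<in>#Phi. a \<noteq> b \<longrightarrow> inf a b = bot \<or> a < b \<or> b < a"
    and q1: "q1 \<in> mb Phi p" and q2: "q2 \<in> mb Phi p" and ne: "q1 \<noteq> q2"
  shows "inf (fst q1) (fst q2) = (bot::'a::complete_lattice)"
proof -
  have c1: "q1 \<in> copies Phi" "copy_less q1 p" "\<not> (\<exists>r\<in>copies Phi. copy_less r p \<and> copy_less q1 r)"
    using q1 by (auto simp: mb_def)
  have c2: "q2 \<in> copies Phi" "copy_less q2 p" "\<not> (\<exists>r\<in>copies Phi. copy_less r p \<and> copy_less q2 r)"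
    using q2 by (auto simp: mb_def)
  have n12: "\<not> copy_less q1 q2" using c1 c2 by blast
  have n21: "\<not> copy_less q2 q1" using c1 c2 by blast
  show ?thesis
  proof (cases "fst q1 = fst q2")
    case True
    then have "snd q1 \<noteq> snd q2" using ne by (metis prod.expand)
    then show ?thesis using True n12 n21 by (auto simp: copy_less_def)
  next
    case False
    have "fst q1 \<in># Phi" "fst q2 \<in># Phi" using copies_in[OF c1(1)] copies_in[OF c2(1)] by auto
    then have "inf (fst q1) (fst q2) = bot \<or> fst q1 < fst q2 \<or> fst q2 < fst q1"
      using ph False by blast
    then show ?thesis using n12 n21 by (auto simp: copy_less_def)
  qed
qed

locale mes =
  fixes imp :: "'a::{finite,complete_lattice} \<Rightarrow> 'a \<Rightarrow> 'a" and D :: "'a \<Rightarrow> 'a"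
    and m :: "'a \<Rightarrow> real" and c0 :: 'a
  assumes hi: "heyting_imp imp" and meas: "i_measure D m" and c0: "c0 \<in> MinA D"
begin

lemma dom: "x \<le> c0 \<Longrightarrow> x \<in> MinA_down D"
  using c0 by (auto simp: MinA_down_def)

lemma m_nonneg: "x \<le> c0 \<Longrightarrow> 0 \<le> m x"
  using meas dom by (auto simp: i_measure_def i_premeasure_def)

lemma m_mono: "x \<le> y \<Longrightarrow> y \<le> c0 \<Longrightarrow> m x \<le> m y"
  using meas dom[of x] dom[of y] by (auto simp: i_measure_def i_premeasure_def)

lemma m_strict: "x < y \<Longrightarrow> y \<le> c0 \<Longrightarrow> m x < m y"
  using meas c0 by (auto simp: i_measure_def)

lemma m_bot: "m bot = 0"
proof -
  have "MinA_down D \<noteq> {}" using dom[of c0] by auto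
  then show ?thesis using meas by (auto simp: i_measure_def i_premeasure_def)
qed

lemma m_add: "b \<le> c0 \<Longrightarrow> c \<le> c0 \<Longrightarrow> m (sup b c) = m b + m c - m (inf b c)"
  using meas c0 by (auto simp: i_measure_def i_premeasure_def)

lemma sum_add:
  assumes "finite S" "\<forall>q1\<in>S. \<forall>q2\<in>S. q1 \<noteq> q2 \<longrightarrow> inf (fst q1) (fst q2) = bot"
    and x: "x \<le> c0"
  shows "(\<Sum>q\<in>S. m (inf x (fst q))) = m (inf x (Sup (fst ` S)))"
  using assms
proof (induction S rule: finite_induct)
  case empty
  then show ?case using m_bot by simp
next
  case (insert q S)
  have IH: "(\<Sum>q\<in>S. m (inf x (fst q))) = m (inf x (Sup (fst ` S)))"
    using insert by blast
  have dj: "inf (fst q) (Sup (fst ` S)) = bot"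
  proof (rule hey_Sup_bot[OF hi])
    show "\<forall>s\<in>fst ` S. inf (fst q) s = bot" using insert by auto
  qed
  have "inf x (Sup (fst ` insert q S)) = sup (inf x (fst q)) (inf x (Sup (fst ` S)))"
    by (simp add: hey_distrib[OF hi])
  moreover have "inf (inf x (fst q)) (inf x (Sup (fst ` S))) = bot"
    using dj by (metis inf.left_commute inf_bot_right inf_commute inf.assoc)
  ultimately have "m (inf x (Sup (fst ` insert q S))) = m (inf x (fst q)) + m (inf x (Sup (fst ` S)))"
    using m_add[of "inf x (fst q)" "inf x (Sup (fst ` S))"] x m_bot
    by (simp add: le_infI1)
  then show ?case using insert IH by simp
qed

lemma mu_a_nonneg:
  assumes ph: "\<forall>a\<in>#Phi. \<forall>b\<in>#Phi. a \<noteq> b \<longrightarrow> inf a b = bot \<or> a < b \<or> b < a"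
    and x: "x \<le> c0"
  shows "0 \<le> mu_a m Phi p x"
proof -
  have "(\<Sum>q\<in>mb Phi p. m (inf x (fst q))) = m (inf x (Sup (fst ` mb Phi p)))"
    by (rule sum_add[OF finite_mb _ x]) (use mb_disj[OF ph] in blast)
  moreover have "Sup (fst ` mb Phi p) \<le> fst p"
    using mb_less copy_less_le by (blast intro: Sup_least)
  then have "m (inf x (Sup (fst ` mb Phi p))) \<le> m (inf x (fst p))"
    using m_mono[of "inf x (Sup (fst ` mb Phi p))" "inf x (fst p)"] x
    by (meson inf_mono order_refl le_infI1)
  ultimately show ?thesis by (simp add: mu_a_def)
qed


lemma muP_pos:
  assumes ph: "\<forall>a\<in>#Phi. \<forall>b\<in>#Phi. a \<noteq> b \<longrightarrow> inf a b = bot \<or> a < b \<or> b < a"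
    and fE: "finite E" and Ppos: "\<forall>e\<in>E. 0 < Pi e"
    and pre0: "\<forall>p\<in>copies Phi. \<forall>e\<in>E. 0 \<le> pre e p"
    and down: "\<forall>p\<in>copies Phi. \<forall>q\<in>copies Phi. \<forall>e\<in>E. copy_less p q \<and> pre e p = 0 \<longrightarrow> pre e q = 0"
    and fle: "\<forall>e. f e \<le> c0"
    and nz: "inf f (prebar E Phi pre) \<noteq> bot"
  shows "0 < muP E Pi Phi pre m f"
proof -
  obtain e where e: "inf (f e) (prebar E Phi pre e) \<noteq> bot"
    using nz by (metis inf_fun_def bot_fun_def HOL.ext)
  have eE: "e \<in> E" using e by (auto simp: prebar_def split: if_splits)
  have "\<exists>p\<in>copies Phi. pre e p \<noteq> 0 \<and> inf (f e) (fst p) \<noteq> bot"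
  proof (rule ccontr)
    assume "\<not> ?thesis"
    then have "\<forall>x\<in>{fst p | p. p \<in> copies Phi \<and> pre e p \<noteq> 0}. inf (f e) x = bot" by auto
    then have "inf (f e) (Sup {fst p | p. p \<in> copies Phi \<and> pre e p \<noteq> 0}) = bot"
      by (rule hey_Sup_bot[OF hi])
    then show False using e eE by (simp add: prebar_def)
  qed
  then obtain p1 where p1: "p1 \<in> {p \<in> copies Phi. pre e p \<noteq> 0 \<and> inf (f e) (fst p) \<noteq> bot}" by blast
  define R where "R = {(q, p). q \<in> copies Phi \<and> p \<in> copies Phi \<and> copy_less q p}"
  have "finite R"
  proof -
    have "R \<subseteq> copies Phi \<times> copies Phi" by (auto simp: R_def)
    then show ?thesis using finite_copies finite_subset by blast
  qed
  moreover have "trans R" unfolding R_def trans_def using copy_less_trans by blast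
  then have "acyclic R" unfolding acyclic_def by (auto simp: R_def copy_less_def)
  ultimately have "wf R" by (rule finite_acyclic_wf)
  define Q where "Q = {p \<in> copies Phi. pre e p \<noteq> 0 \<and> inf (f e) (fst p) \<noteq> bot}"
  have "\<exists>z\<in>Q. \<forall>y. (y, z) \<in> R \<longrightarrow> y \<notin> Q"
    using \<open>wf R\<close> p1 unfolding wf_eq_minimal Q_def[symmetric] by blast
  then obtain p0 where p0: "p0 \<in> {p \<in> copies Phi. pre e p \<noteq> 0 \<and> inf (f e) (fst p) \<noteq> bot}"
    and p0min: "\<forall>q. (q, p0) \<in> R \<longrightarrow> q \<notin> {p \<in> copies Phi. pre e p \<noteq> 0 \<and> inf (f e) (fst p) \<noteq> bot}"
    unfolding Q_def by blast
  have mbz: "inf (f e) (fst q) = bot" if q: "q \<in> mb Phi p0" for q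
  proof -
    have qc: "q \<in> copies Phi" "copy_less q p0" using mb_sub[of Phi p0] mb_less[OF q] q by auto
    have "pre e q \<noteq> 0" using down qc p0 eE by blast
    moreover have "(q, p0) \<in> R" using qc p0 by (simp add: R_def)
    then have "q \<notin> {p \<in> copies Phi. pre e p \<noteq> 0 \<and> inf (f e) (fst p) \<noteq> bot}" using p0min by blast
    ultimately show ?thesis using qc by blast
  qed
  have "mu_a m Phi p0 (f e) = m (inf (f e) (fst p0))"
    using mbz m_bot by (simp add: mu_a_def)
  moreover have "bot < inf (f e) (fst p0)" using p0 by (simp add: bot_less)
  then have "0 < m (inf (f e) (fst p0))"
    using m_strict[of bot "inf (f e) (fst p0)"] m_bot fle by (simp add: le_infI1)
  ultimately have mpos: "0 < mu_a m Phi p0 (f e)" by simp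
  have prepos: "0 < pre e p0" using pre0 p0 eE by force
  have nonneg: "0 \<le> Pi e' * mu_a m Phi p (f e') * pre e' p" if "e' \<in> E" "p \<in> copies Phi" for e' p
    using Ppos pre0 that mu_a_nonneg[OF ph fle[rule_format, of e']]
    by (meson less_imp_le mult_nonneg_nonneg)
  have inner: "0 < (\<Sum>p\<in>copies Phi. Pi e * mu_a m Phi p (f e) * pre e p)"
    by (rule sum_pos2[OF finite_copies, of p0]) (use p0 mpos prepos Ppos eE nonneg in auto)
  show ?thesis unfolding muP_def
    by (rule sum_pos2[where f="\<lambda>e. \<Sum>p\<in>copies Phi. Pi e * mu_a m Phi p (f e) * pre e p", OF fE eE inner]) (use nonneg in \<open>auto intro: sum_nonneg\<close>)
qed

end


lemma AE_inf: "f \<in> AE E \<Longrightarrow> inf f g \<in> AE E" by (simp add: AE_def)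
lemma AE_bot: "bot \<in> AE E" by (simp add: AE_def)
lemma mem_qclass: "h \<in> qclass E c x \<longleftrightarrow> h \<in> AE E \<and> inf h c = inf x c"
  by (simp add: qclass_def)
lemma qclass_eq: "inf a c = inf b c \<Longrightarrow> qclass E c a = qclass E c b"
  by (simp add: qclass_def)
lemma qclass_eqD: "a \<in> AE E \<Longrightarrow> qclass E c a = qclass E c b \<Longrightarrow> inf a c = inf b c"
  by (metis mem_qclass)
lemma Qcarrier_E: "X \<in> Qcarrier E c \<Longrightarrow> \<exists>x\<in>AE E. X = qclass E c x"
  by (auto simp: Qcarrier_def)
lemma qclass_in_Q: "x \<in> AE E \<Longrightarrow> qclass E c x \<in> Qcarrier E c"
  by (auto simp: Qcarrier_def)
lemma qdia_qclass:
  assumes "x \<in> AE E"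
  shows "qdia E s D c (qclass E c x) = qclass E c (diaP E s D (inf x c))"
proof -
  have "x \<in> qclass E c x" using assms by (simp add: mem_qclass)
  then have "(SOME y. y \<in> qclass E c x) \<in> qclass E c x" using someI[of "\<lambda>y. y \<in> qclass E c x" x] by blast
  then have "inf (SOME y. y \<in> qclass E c x) c = inf x c" by (simp add: mem_qclass)
  then show ?thesis unfolding qdia_def by (metis inf.assoc inf.idem)
qed
lemma qle_qclass:
  assumes "x \<in> AE E" "y \<in> AE E"
  shows "qle c (qclass E c x) (qclass E c y) \<longleftrightarrow> inf x c \<le> inf y c"
  using assms unfolding qle_def by (auto simp: mem_qclass)

context pax
begin

lemma MinQ_D:
  assumes "F \<in> MinQ E s D c"
  shows "F \<in> Qcarrier E c" "F \<noteq> qclass E c bot" "qdia E s D c F = F"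
    "\<And>d. d \<in> Qcarrier E c \<Longrightarrow> qle c d F \<Longrightarrow> qdia E s D c d = d \<Longrightarrow> d \<noteq> qclass E c bot \<Longrightarrow> d = F"
  using assms unfolding MinQ_def minimal_elts_def by blast+

lemma fixF:
  assumes "F \<in> MinQ E s D c" "f \<in> AE E" "F = qclass E c f"
  shows "inf (diaP E s D (inf f c)) c = inf f c"
proof -
  have "qclass E c (diaP E s D (inf f c)) = qclass E c f"
    using MinQ_D(3)[OF assms(1)] qdia_qclass[OF assms(2)] assms(3) by simp
  then show ?thesis using qclass_eqD diaP_AE by blast
qed

lemma ne_bot: "f \<in> AE E \<Longrightarrow> qclass E c f \<noteq> qclass E c bot \<Longrightarrow> inf f c \<noteq> bot"
  using qclass_eq[of f c bot] by auto

lemma uniqueF: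
  assumes cA: "c \<in> AE E" and x: "x \<in> AE E" and Xnb: "qclass E c x \<noteq> qclass E c bot"
    and F1: "F1 \<in> MinQ E s D c" "qle c (qclass E c x) F1"
    and F2: "F2 \<in> MinQ E s D c" "qle c (qclass E c x) F2"
  shows "F1 = F2"
proof -
  obtain f1 where f1: "f1 \<in> AE E" "F1 = qclass E c f1" using MinQ_D(1)[OF F1(1)] Qcarrier_E by blast
  obtain f2 where f2: "f2 \<in> AE E" "F2 = qclass E c f2" using MinQ_D(1)[OF F2(1)] Qcarrier_E by blast
  have le1: "inf x c \<le> inf f1 c" using F1(2) f1 qle_qclass[OF x f1(1)] by simp
  have le2: "inf x c \<le> inf f2 c" using F2(2) f2 qle_qclass[OF x f2(1)] by simp
  define y where "y = inf (inf f1 c) (inf f2 c)"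
  have yA: "y \<in> AE E" using f1 by (simp add: y_def AE_inf)
  have yc: "inf y c = y" by (simp add: y_def inf_aci)
  have "inf x c \<le> y" using le1 le2 by (simp add: y_def)
  moreover have "inf x c \<noteq> bot" using ne_bot[OF x Xnb] .
  ultimately have ynb: "y \<noteq> bot" using bot_unique by blast
  have Ynb: "qclass E c y \<noteq> qclass E c bot"
  proof
    assume "qclass E c y = qclass E c bot"
    then have "inf y c = inf bot c" using qclass_eqD[OF yA] by blast
    then show False using yc ynb by simp
  qed
  have fx1: "inf (diaP E s D (inf f1 c)) c = inf f1 c" by (rule fixF[OF F1(1) f1])
  have fx2: "inf (diaP E s D (inf f2 c)) c = inf f2 c" by (rule fixF[OF F2(1) f2])
  have "inf (diaP E s D y) c \<le> inf (diaP E s D (inf f1 c)) c"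
  proof -
    have "y \<le> inf f1 c" unfolding y_def by (rule inf.cobounded1)
    then have "diaP E s D y \<le> diaP E s D (inf f1 c)" by (rule diaP_mono)
    then show ?thesis by (rule inf_mono) simp
  qed
  moreover have "inf (diaP E s D y) c \<le> inf (diaP E s D (inf f2 c)) c"
  proof -
    have "y \<le> inf f2 c" unfolding y_def by (rule inf.cobounded2)
    then have "diaP E s D y \<le> diaP E s D (inf f2 c)" by (rule diaP_mono)
    then show ?thesis by (rule inf_mono) simp
  qed
  ultimately have "inf (diaP E s D y) c \<le> y" using fx1 fx2 by (simp add: y_def)
  moreover have "y \<le> inf (diaP E s D y) c" using diaP_ext[OF yA] yc by (metis inf_mono order_refl)
  ultimately have fy: "inf (diaP E s D y) c = y" by (rule antisym)
  have Yfix: "qdia E s D c (qclass E c y) = qclass E c y"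
    using qdia_qclass[OF yA] yc fy qclass_eq[of "diaP E s D y" c y E] by simp
  have yl1: "inf y c \<le> inf f1 c" using yc by (metis y_def inf.cobounded1)
  have yl2: "inf y c \<le> inf f2 c" using yc by (metis y_def inf.cobounded2)
  have "qle c (qclass E c y) (qclass E c f1)" by (rule iffD2[OF qle_qclass[OF yA f1(1)] yl1])
  then have "qle c (qclass E c y) F1" using f1(2) by simp
  then have eq1: "qclass E c y = F1" using MinQ_D(4)[OF F1(1) qclass_in_Q[OF yA]] Yfix Ynb by blast
  have "qle c (qclass E c y) (qclass E c f2)" by (rule iffD2[OF qle_qclass[OF yA f2(1)] yl2])
  then have "qle c (qclass E c y) F2" using f2(2) by simp
  then have eq2: "qclass E c y = F2" using MinQ_D(4)[OF F2(1) qclass_in_Q[OF yA]] Yfix Ynb by blast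
  from eq1 eq2 show ?thesis by simp
qed

lemma F_below_MinP:
  assumes cA: "c \<in> AE E" and F: "F \<in> MinQ E s D c" and f1: "f1 \<in> AE E" "F = qclass E c f1"
  shows "\<exists>f0\<in>MinP E s D. inf f1 c \<le> f0"
proof -
  define y where "y = inf f1 c"
  have yA: "y \<in> AE E" using f1 by (simp add: y_def AE_inf)
  have ynb: "y \<noteq> bot" using ne_bot[OF f1(1)] MinQ_D(2)[OF F] f1(2) by (simp add: y_def)
  obtain e0 where e0: "y e0 \<noteq> bot" using ynb by (metis bot_fun_def HOL.ext)
  have e0E: "e0 \<in> E" using e0 yA by (auto simp: AE_def)
  have "D (y e0) \<noteq> bot" using e0 extD[of "y e0"] bot_unique by metis
  then obtain c0 where c0: "c0 \<in> MinA D" "c0 \<le> D (y e0)" using exists_atom idem by blast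
  have meet: "inf c0 (y e0) \<noteq> bot" by (rule atom_meets[OF c0])
  define f0 where "f0 = ind c0 e0"
  have f0M: "f0 \<in> MinP E s D" unfolding f0_def by (rule MinP_of_atom[OF c0(1) e0E])
  have Dc0: "D c0 = c0" using c0 by (auto simp: MinA_def minimal_elts_def)
  have f0fix: "diaP E s D f0 = f0" unfolding f0_def by (rule ind_fix[OF Dc0])
  define z where "z = inf f0 y"
  have zA: "z \<in> AE E" using ind_AE by (simp add: z_def f0_def AE_inf)
  have yc: "inf y c = y" by (simp add: y_def inf.assoc)
  have zc: "inf z c = z" by (simp add: z_def yc inf.assoc)
  have "z e0 = inf c0 (y e0)" using e0E s_refl[OF e0E] by (simp add: z_def f0_def ind_def)
  then have znb: "z \<noteq> bot" using meet by (metis bot_fun_def)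
  have Znb: "qclass E c z \<noteq> qclass E c bot"
  proof
    assume "qclass E c z = qclass E c bot"
    then have "inf z c = inf bot c" using qclass_eqD[OF zA] by blast
    then show False using zc znb by simp
  qed
  have fxy: "inf (diaP E s D y) c = y" using fixF[OF F f1] by (simp add: y_def)
  have "inf (diaP E s D z) c \<le> inf (diaP E s D y) c"
    using diaP_mono[of z y] by (simp add: z_def le_infI1)
  moreover have "diaP E s D z \<le> f0"
    using diaP_mono[of z f0] f0fix by (simp add: z_def)
  ultimately have "inf (diaP E s D z) c \<le> z" using fxy by (simp add: z_def le_infI1)
  moreover have "z \<le> inf (diaP E s D z) c" using diaP_ext[OF zA] zc by (metis inf_mono order_refl)
  ultimately have fz: "inf (diaP E s D z) c = z" by (rule antisym)
  have Zfix: "qdia E s D c (qclass E c z) = qclass E c z"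
    using qdia_qclass[OF zA] zc fz qclass_eq[of "diaP E s D z" c z E] by simp
  have "inf z c \<le> inf f1 c" using zc by (simp add: z_def y_def le_infI2)
  then have "qle c (qclass E c z) (qclass E c f1)" by (rule iffD2[OF qle_qclass[OF zA f1(1)]])
  then have "qle c (qclass E c z) F" using f1(2) by simp
  then have "qclass E c z = F" using MinQ_D(4)[OF F qclass_in_Q[OF zA]] Zfix Znb by blast
  then have "inf z c = inf f1 c" using qclass_eqD[OF zA] f1(2) by blast
  then have "y \<le> f0" using zc by (metis y_def z_def inf.cobounded1)
  then show ?thesis using f0M by (auto simp: y_def)
qed

end


lemma muP_cong:
  assumes "inf g (prebar E Phi pre) = inf g' (prebar E Phi pre)"
  shows "muP E Pi Phi pre m g = muP E Pi Phi pre m g'"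
  unfolding muP_def
proof (intro sum.cong refl)
  fix e p assume eE: "e \<in> E" and pc: "p \<in> copies Phi"
  show "Pi e * mu_a m Phi p (g e) * pre e p = Pi e * mu_a m Phi p (g' e) * pre e p"
  proof (cases "pre e p = 0")
    case True then show ?thesis by simp
  next
    case False
    have "fst p \<in> {fst p |p. p \<in> copies Phi \<and> pre e p \<noteq> 0}" using pc False by blast
    then have pc_le: "fst p \<le> prebar E Phi pre e"
      using eE by (simp add: prebar_def Sup_upper)
    have ce: "inf (g e) (prebar E Phi pre e) = inf (g' e) (prebar E Phi pre e)"
      using fun_cong[OF assms, of e] by (simp add: inf_fun_def)
    have key: "inf (g e) b = inf (g' e) b" if "b \<le> fst p" for b
    proof -
      have bc: "b \<le> prebar E Phi pre e" using that pc_le by (rule order_trans)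
      have "inf (g e) b = inf (inf (g e) (prebar E Phi pre e)) b" using bc by (simp add: inf.absorb2 inf.assoc)
      also have "\<dots> = inf (inf (g' e) (prebar E Phi pre e)) b" using ce by simp
      also have "\<dots> = inf (g' e) b" using bc by (simp add: inf.absorb2 inf.assoc)
      finally show ?thesis .
    qed
    have hq: "\<And>q. q \<in> mb Phi p \<Longrightarrow> inf (g e) (fst q) = inf (g' e) (fst q)"
      using key mb_less copy_less_le by blast
    then have "(\<Sum>q\<in>mb Phi p. m (inf (g e) (fst q))) = (\<Sum>q\<in>mb Phi p. m (inf (g' e) (fst q)))"
      by (intro sum.cong) auto
    then have "mu_a m Phi p (g e) = mu_a m Phi p (g' e)"
      unfolding mu_a_def using key[of "fst p"] by simp
    then show ?thesis by simp
  qed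
qed

theorem lemma6:
  fixes Ag :: "'i set"
    and imp :: "'a::{finite,complete_lattice} \<Rightarrow> 'a \<Rightarrow> 'a"
    and dia box :: "'i \<Rightarrow> 'a \<Rightarrow> 'a"
    and mu :: "'i \<Rightarrow> 'a \<Rightarrow> real"
    and E :: "'e set"
    and sim :: "'i \<Rightarrow> ('e \<times> 'e) set"
    and P :: "'i \<Rightarrow> 'e \<Rightarrow> real"
    and Phi :: "'a multiset"
    and pre :: "'e \<Rightarrow> 'a \<times> nat \<Rightarrow> real"
  assumes "APE_structure Ag imp dia box mu"
    and "prob_event_structure Ag E sim P Phi pre"
  shows "let c = prebar E Phi pre in
    \<forall>i\<in>Ag. \<forall>X\<in>MinQ_down E (sim i) (dia i) c. X \<noteq> qclass E c bot \<longrightarrow>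
      (\<exists>!F. F \<in> MinQ E (sim i) (dia i) c \<and> qle c X F) \<and>
      (\<forall>F. F \<in> MinQ E (sim i) (dia i) c \<and> qle c X F \<longrightarrow>
         (\<exists>g\<in>X. \<exists>f\<in>F. g \<in> MinP_down E (sim i) (dia i) \<and> f \<in> MinP_down E (sim i) (dia i)) \<and>
         (\<forall>f\<in>F. f \<in> MinP_down E (sim i) (dia i) \<longrightarrow> muP E (P i) Phi pre (mu i) f \<noteq> 0) \<and>
         (\<forall>g\<in>X. \<forall>f\<in>F. \<forall>g'\<in>X. \<forall>f'\<in>F.
            g \<in> MinP_down E (sim i) (dia i) \<and> f \<in> MinP_down E (sim i) (dia i) \<and>
            g' \<in> MinP_down E (sim i) (dia i) \<and> f' \<in> MinP_down E (sim i) (dia i) \<longrightarrow>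
            muP E (P i) Phi pre (mu i) g / muP E (P i) Phi pre (mu i) f =
            muP E (P i) Phi pre (mu i) g' / muP E (P i) Phi pre (mu i) f'))"
proof -
  define c where "c = prebar E Phi pre"
  have cA: "c \<in> AE E" by (simp add: c_def prebar_def AE_def)
  have ep: "epistemic_heyting Ag imp dia box" using assms(1) unfolding APE_structure_def by (rule conjunct1)
  then have mh: "monadic_heyting Ag imp dia box" unfolding epistemic_heyting_def by (rule conjunct1)
  then have hi: "heyting_imp imp" unfolding monadic_heyting_def by (rule conjunct1)
  have pes1: "finite E" using assms(2) unfolding prob_event_structure_def by (elim conjE)
  have pes2: "\<forall>i\<in>Ag. equiv E (sim i)" using assms(2) unfolding prob_event_structure_def by (elim conjE)
  have pes3: "\<forall>i\<in>Ag. \<forall>e\<in>E. 0 < P i e" using assms(2) unfolding prob_event_structure_def by (elim conjE) blast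
  have pes4: "\<forall>a\<in>#Phi. \<forall>b\<in>#Phi. a \<noteq> b \<longrightarrow> inf a b = bot \<or> a < b \<or> b < a"
    using assms(2) unfolding prob_event_structure_def by (elim conjE)
  have pes5: "\<forall>p\<in>copies Phi. \<forall>e\<in>E. 0 \<le> pre e p" using assms(2) unfolding prob_event_structure_def by (elim conjE) blast
  have pes6: "\<forall>p\<in>copies Phi. \<forall>q\<in>copies Phi. \<forall>e\<in>E. copy_less p q \<and> pre e p = 0 \<longrightarrow> pre e q = 0"
    using assms(2) unfolding prob_event_structure_def by (elim conjE)
  note pes = pes1 pes2 pes3 pes4 pes5 pes6
  have main: "\<forall>X\<in>MinQ_down E (sim i) (dia i) c. X \<noteq> qclass E c bot \<longrightarrow>
      (\<exists>!F. F \<in> MinQ E (sim i) (dia i) c \<and> qle c X F) \<and>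
      (\<forall>F. F \<in> MinQ E (sim i) (dia i) c \<and> qle c X F \<longrightarrow>
         (\<exists>g\<in>X. \<exists>f\<in>F. g \<in> MinP_down E (sim i) (dia i) \<and> f \<in> MinP_down E (sim i) (dia i)) \<and>
         (\<forall>f\<in>F. f \<in> MinP_down E (sim i) (dia i) \<longrightarrow> muP E (P i) Phi pre (mu i) f \<noteq> 0) \<and>
         (\<forall>g\<in>X. \<forall>f\<in>F. \<forall>g'\<in>X. \<forall>f'\<in>F.
            g \<in> MinP_down E (sim i) (dia i) \<and> f \<in> MinP_down E (sim i) (dia i) \<and>
            g' \<in> MinP_down E (sim i) (dia i) \<and> f' \<in> MinP_down E (sim i) (dia i) \<longrightarrow>
            muP E (P i) Phi pre (mu i) g / muP E (P i) Phi pre (mu i) f =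
            muP E (P i) Phi pre (mu i) g' / muP E (P i) Phi pre (mu i) f'))"
    if iA: "i \<in> Ag" for i
  proof -
    have meas: "i_measure (dia i) (mu i)"
      using conjunct2[OF assms(1)[unfolded APE_structure_def]] iA by (rule bspec)
    have H: "mono (dia i) \<and> mono (box i) \<and>
        (\<forall>a b. a \<le> dia i a \<and> box i a \<le> a \<and>
               dia i (sup a b) \<le> sup (dia i a) (dia i b) \<and>
               box i (imp a b) \<le> imp (box i a) (box i b) \<and>
               dia i a \<le> box i (dia i a) \<and>
               dia i (box i a) \<le> box i a \<and>
               box i (imp a b) \<le> imp (dia i a) (dia i b)) \<and>
        dia i bot \<le> bot \<and> top \<le> box i top"
      using conjunct2[OF mh[unfolded monadic_heyting_def]] iA by (rule bspec)
    have eqi: "equiv E (sim i)" using pes2 iA by blast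
    interpret pax imp "dia i" "box i" E "sim i"
    proof unfold_locales
      show "heyting_imp imp" by (rule hi)
      show "mono (dia i)" using H by blast
      show "mono (box i)" using H by blast
      show "\<And>a. a \<le> dia i a" using H by blast
      show "\<And>a. box i a \<le> a" using H by blast
      show "\<And>a. dia i a \<le> box i (dia i a)" using H by blast
      show "\<And>a. dia i (box i a) \<le> box i a" using H by blast
      show "\<And>a b. box i (imp a b) \<le> imp (dia i a) (dia i b)" using H by blast
      show "dia i bot \<le> bot" using H by blast
      show "equiv E (sim i)" by (rule eqi)
    qed
    show ?thesis
    proof (intro ballI impI conjI allI)
      fix X assume XD: "X \<in> MinQ_down E (sim i) (dia i) c" and Xnb: "X \<noteq> qclass E c bot"
      have "X \<in> Qcarrier E c" using XD unfolding MinQ_down_def by simp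
      then obtain x where x: "x \<in> AE E" "X = qclass E c x"
        using Qcarrier_E by blast
      obtain F0 where F0: "F0 \<in> MinQ E (sim i) (dia i) c" "qle c X F0"
        using XD unfolding MinQ_down_def by blast
      have xnb: "qclass E c x \<noteq> qclass E c bot" using Xnb x(2) by simp
      show "\<exists>!F. F \<in> MinQ E (sim i) (dia i) c \<and> qle c X F"
      proof (rule ex1I[of _ F0])
        show "F0 \<in> MinQ E (sim i) (dia i) c \<and> qle c X F0" using F0 by simp
        fix F' assume F': "F' \<in> MinQ E (sim i) (dia i) c \<and> qle c X F'"
        show "F' = F0"
          by (rule uniqueF[OF cA x(1) xnb]) (use F' F0 x(2) in simp_all)
      qed
      fix F assume FF: "F \<in> MinQ E (sim i) (dia i) c \<and> qle c X F"
      have FM: "F \<in> MinQ E (sim i) (dia i) c" using FF by (rule conjunct1)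
      have "F \<in> Qcarrier E c" by (rule MinQ_D(1)[OF FM])
      then obtain f1 where f1: "f1 \<in> AE E" "F = qclass E c f1"
        using Qcarrier_E by blast
      obtain f0 where f0: "f0 \<in> MinP E (sim i) (dia i)" "inf f1 c \<le> f0"
        using F_below_MinP[OF cA FM f1] by blast
      have "qle c (qclass E c x) (qclass E c f1)" using conjunct2[OF FF] x(2) f1(2) by simp
      then have xle: "inf x c \<le> inf f1 c" by (rule iffD1[OF qle_qclass[OF x(1) f1(1)]])
      have "qclass E c f1 \<noteq> qclass E c bot" using MinQ_D(2)[OF FM] f1(2) by simp
      then have f1nb: "inf f1 c \<noteq> bot" by (rule ne_bot[OF f1(1)])
      show "\<exists>g\<in>X. \<exists>f\<in>F. g \<in> MinP_down E (sim i) (dia i) \<and> f \<in> MinP_down E (sim i) (dia i)"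
      proof -
        have a1: "inf x c \<in> X" using x by (simp add: mem_qclass AE_inf inf.assoc)
        have a2: "inf f1 c \<in> F" using f1 by (simp add: mem_qclass AE_inf inf.assoc)
        have "inf x c \<le> f0" using xle f0(2) by (rule order_trans)
        then have a3: "inf x c \<in> MinP_down E (sim i) (dia i)"
          unfolding MinP_down_def using AE_inf[OF x(1)] f0(1) by blast
        have a4: "inf f1 c \<in> MinP_down E (sim i) (dia i)"
          unfolding MinP_down_def using AE_inf[OF f1(1)] f0 by blast
        show ?thesis using a1 a2 a3 a4 by blast
      qed
      show "muP E (P i) Phi pre (mu i) f \<noteq> 0"
        if fF: "f \<in> F" and fD: "f \<in> MinP_down E (sim i) (dia i)" for f
      proof -
        obtain f0' where f0': "f0' \<in> MinP E (sim i) (dia i)" "f \<le> f0'"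
          using fD unfolding MinP_down_def by blast
        obtain c0 where c0: "c0 \<in> MinA (dia i)" "\<forall>e. f0' e \<le> c0"
          using MinP_below_atom[OF f0'(1)] by blast
        have fle: "\<forall>e. f e \<le> c0"
        proof
          fix e show "f e \<le> c0" using le_funD[OF f0'(2), of e] c0(2) order_trans by blast
        qed
        have "inf f c = inf f1 c" using fF f1(2) by (simp add: mem_qclass)
        then have nz: "inf f (prebar E Phi pre) \<noteq> bot" using f1nb by (simp add: c_def)
        interpret M: mes imp "dia i" "mu i" c0 using hi meas c0(1) by unfold_locales
        have "0 < muP E (P i) Phi pre (mu i) f"
          by (rule M.muP_pos[OF pes(4) pes(1) _ pes(5) pes(6) fle nz]) (use pes(3) iA in blast)
        then show ?thesis by simp
      qed
      show "muP E (P i) Phi pre (mu i) g / muP E (P i) Phi pre (mu i) f =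
            muP E (P i) Phi pre (mu i) g' / muP E (P i) Phi pre (mu i) f'"
        if "g \<in> X" "f \<in> F" "g' \<in> X" "f' \<in> F" for g f g' f'
      proof -
        from that have "inf g c = inf g' c" "inf f c = inf f' c"
          using x(2) f1(2) by (auto simp: mem_qclass)
        then have h1: "inf g (prebar E Phi pre) = inf g' (prebar E Phi pre)"
          and h2: "inf f (prebar E Phi pre) = inf f' (prebar E Phi pre)" unfolding c_def .
        have "muP E (P i) Phi pre (mu i) g = muP E (P i) Phi pre (mu i) g'" by (rule muP_cong[OF h1])
        moreover have "muP E (P i) Phi pre (mu i) f = muP E (P i) Phi pre (mu i) f'" by (rule muP_cong[OF h2])
        ultimately show ?thesis by simp
      qed
    qed
  qed
  show ?thesis unfolding Let_def c_def[symmetric]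
    by (rule ballI, rule main, assumption)
qed

end
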